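(* For any $n\ge0$ and any even number $N>4$, almost surely $$1\le\mathbb E\Big(\frac{\phi(p_n)}{p_{n+1}}\,\Big|\,p_n\Big)\le1+\frac{\iota}{N},$$ for a finite constant $\iota$ depending only on $(A,B,C,D)$.
   Context: Model: nonzero reals $A,B,C,D$, $R:=B^2$, $S:=(C/D)^2$; $(V_n),(W_n)$ i.i.d. $N(0,1)$, $X_0\sim N(\widehat X_0^-,P_0)$ ($P_0>0$) independent, $X_{n+1}=AX_n+BW_{n+1}$, $Y_n=CX_n+DV_n$. $\phi(x):=\frac{(A^2+RS)x+R}{Sx+1}$. EnKF with $N+1$ particles: $\xi^i_0$ i.i.d. copies of $X_0$; independent i.i.d. $N(0,1)$ families $(V^i_n),(W^i_n)$ independent of the model; $m_n$ sample mean, $p_n:=\frac1N\sum_{i=1}^{N+1}(\xi^i_n-m_n)^2$, $g_n:=Cp_n/(C^2p_n+D^2)$, $\widehat\xi^i_n:=\xi^i_n+g_n(Y_n-C\xi^i_n-DV^i_n)$, $\xi^i_{n+1}:=A\widehat\xi^i_n+BW^i_{n+1}$. *)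

theory Defs
  imports "HOL-Probability.Probability"
begin

definition phi :: "real \<Rightarrow> real \<Rightarrow> real \<Rightarrow> real \<Rightarrow> real \<Rightarrow> real" where
  "phi A B C D x = (let R = B^2; S = (C/D)^2 in ((A^2 + R*S)*x + R) / (S*x + 1))"

definition smean :: "nat \<Rightarrow> (nat \<Rightarrow> real) \<Rightarrow> real" where
  "smean N x = (\<Sum>i=1..N+1. x i) / real (N+1)"

definition svar :: "nat \<Rightarrow> (nat \<Rightarrow> real) \<Rightarrow> real" where
  "svar N x = (\<Sum>i=1..N+1. (x i - smean N x)^2) / real N"

text \<open>EnKF particles (pathwise). Arguments: A B C D N, initial particles xi0 i,
  observations Y n, particle observation noises Vp n i, particle signal noises Wp n i.
  Result: enkf ... n i = xi^i_n.\<close>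
primrec enkf :: "real \<Rightarrow> real \<Rightarrow> real \<Rightarrow> real \<Rightarrow> nat \<Rightarrow> (nat \<Rightarrow> real) \<Rightarrow> (nat \<Rightarrow> real)
    \<Rightarrow> (nat \<Rightarrow> nat \<Rightarrow> real) \<Rightarrow> (nat \<Rightarrow> nat \<Rightarrow> real) \<Rightarrow> nat \<Rightarrow> nat \<Rightarrow> real" where
  "enkf A B C D N xi0 Y Vp Wp 0 = xi0"
| "enkf A B C D N xi0 Y Vp Wp (Suc n) =
     (\<lambda>i. let x = enkf A B C D N xi0 Y Vp Wp n;
              p = svar N x;
              g = C * p / (C^2 * p + D^2);
              xhat = x i + g * (Y n - C * x i - D * Vp n i)
          in A * xhat + B * Wp (Suc n) i)"

definition enkf_p :: "real \<Rightarrow> real \<Rightarrow> real \<Rightarrow> real \<Rightarrow> nat \<Rightarrow> (nat \<Rightarrow> real) \<Rightarrow> (nat \<Rightarrow> real)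
    \<Rightarrow> (nat \<Rightarrow> nat \<Rightarrow> real) \<Rightarrow> (nat \<Rightarrow> nat \<Rightarrow> real) \<Rightarrow> nat \<Rightarrow> real" where
  "enkf_p A B C D N xi0 Y Vp Wp n = svar N (enkf A B C D N xi0 Y Vp Wp n)"

datatype rvidx = IX0 | IV nat | IW nat | IXi nat | IVp nat nat | IWp nat nat

definition rvfam :: "('a \<Rightarrow> real) \<Rightarrow> (nat \<Rightarrow> 'a \<Rightarrow> real) \<Rightarrow> (nat \<Rightarrow> 'a \<Rightarrow> real)
    \<Rightarrow> (nat \<Rightarrow> 'a \<Rightarrow> real) \<Rightarrow> (nat \<Rightarrow> nat \<Rightarrow> 'a \<Rightarrow> real) \<Rightarrow> (nat \<Rightarrow> nat \<Rightarrow> 'a \<Rightarrow> real)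
    \<Rightarrow> rvidx \<Rightarrow> 'a \<Rightarrow> real" where
  "rvfam X0 V W xi0 Vp Wp k = (case k of IX0 \<Rightarrow> X0 | IV n \<Rightarrow> V n | IW n \<Rightarrow> W n
      | IXi i \<Rightarrow> xi0 i | IVp n i \<Rightarrow> Vp n i | IWp n i \<Rightarrow> Wp n i)"

definition rvidx_set :: "nat \<Rightarrow> rvidx set" where
  "rvidx_set N = {IX0} \<union> range IV \<union> range IW \<union> IXi ` {1..N+1}
      \<union> {IVp n i | n i. i \<in> {1..N+1}} \<union> {IWp n i | n i. i \<in> {1..N+1}}"

end

theory Submission
  imports Defs
begin

lemma nn_integral_normal_density_1:
  assumes "0 < s"
  shows "(\<integral>\<^sup>+x. ennreal (normal_density m s x) \<partial>lborel) = 1"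
proof -
  interpret prob_space "density lborel (\<lambda>x. ennreal (normal_density m s x))"
    using assms by (rule prob_space_normal_density)
  have "emeasure (density lborel (\<lambda>x. ennreal (normal_density m s x))) UNIV = 1"
    using emeasure_space_1 by simp
  then show ?thesis by (simp add: emeasure_density)
qed

lemma gauss_sq_exp_pointwise:
  fixes s t z x :: real
  assumes s: "0 < s" and t: "0 \<le> t"
  shows "normal_density 0 s x * exp (-t*(z+x)^2)
     = exp (-t*z^2/(1 + 2*t* s^2)) / sqrt (1 + 2*t* s^2) * normal_density (-2*t* s^2*z/(1 + 2*t* s^2)) (s / sqrt (1 + 2*t* s^2)) x"
proof -
  define u where "u = 1 + 2*t* s^2"
  have u: "0 < u" unfolding u_def using s t by (simp add: add_pos_nonneg)
  have e: "- ((x - 0)^2)/(2* s^2) + (-t*(z+x)^2) = -t*z^2/u + (- ((x - (-2*t* s^2*z/u))^2)/(2*(s/sqrt u)^2))"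
  proof -
    have e1: "(s/sqrt u)^2 = s^2/u" using u by (simp add: power_divide)
    show ?thesis unfolding e1 using u s
      apply (simp add: field_simps)
      apply (simp add: u_def)
      apply algebra
      done
  qed
  have c: "1 / sqrt (2*pi* s^2) = 1/sqrt u * (1/ sqrt (2*pi*(s/sqrt u)^2))"
    using u s by (simp add: power_divide real_sqrt_divide real_sqrt_mult)
  have "normal_density 0 s x * exp (-t*(z+x)^2) = 1 / sqrt (2*pi* s^2) * exp (- ((x - 0)^2)/(2* s^2) + (-t*(z+x)^2))"
    unfolding normal_density_def by (simp add: mult_exp_exp)
  also have "\<dots> = exp (-t*z^2/u) / sqrt u * normal_density (-2*t* s^2*z/u) (s / sqrt u) x"
    unfolding e c normal_density_def exp_add by (simp add: field_simps)
  finally show ?thesis unfolding u_def .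
qed

lemma (in prob_space) gauss_sq_exp_E:
  assumes Z: "distributed M lborel Z (\<lambda>x. ennreal (normal_density 0 s x))"
    and s: "0 < s" and t: "0 \<le> t"
  shows "(\<integral>\<^sup>+\<omega>. ennreal (exp (-t*(z + Z \<omega>)^2)) \<partial>M)
     = ennreal (exp (-t*z^2/(1 + 2*t* s^2)) / sqrt (1 + 2*t* s^2))"
proof -
  define K where "K = exp (-t*z^2/(1 + 2*t* s^2)) / sqrt (1 + 2*t* s^2)"
  have K: "0 \<le> K" unfolding K_def using s t by (simp add: add_pos_nonneg)
  have s': "0 < s / sqrt (1 + 2*t* s^2)" using s t by (simp add: add_pos_nonneg)
  have "(\<integral>\<^sup>+\<omega>. ennreal (exp (-t*(z + Z \<omega>)^2)) \<partial>M)
      = (\<integral>\<^sup>+x. ennreal (normal_density 0 s x) * ennreal (exp (-t*(z + x)^2)) \<partial>lborel)"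
    by (rule distributed_nn_integral[OF Z, symmetric]) simp
  also have "\<dots> = (\<integral>\<^sup>+x. ennreal K * ennreal (normal_density (-2*t* s^2*z/(1 + 2*t* s^2)) (s / sqrt (1 + 2*t* s^2)) x) \<partial>lborel)"
    apply (rule nn_integral_cong)
    apply (subst ennreal_mult'[symmetric], simp)
    apply (subst ennreal_mult[symmetric], rule K, simp)
    apply (subst gauss_sq_exp_pointwise[OF s t])
    apply (simp add: K_def)
    done
  also have "\<dots> = ennreal K"
    by (subst nn_integral_cmult) (simp_all add: nn_integral_normal_density_1[OF s'])
  finally show ?thesis unfolding K_def .
qed

lemma gauss_int_c:
  fixes a b :: real
  assumes a: "0 < a"
  shows "(\<integral>\<^sup>+c. ennreal (exp (-a*(c-b)^2)) \<partial>lborel) = ennreal (sqrt (pi/a))"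
proof -
  define s where "s = sqrt (1/(2*a))"
  have s: "0 < s" unfolding s_def using a by simp
  have s2: "s^2 = 1/(2*a)" unfolding s_def using a by simp
  have pw: "exp (-a*(c-b)^2) = sqrt (pi/a) * normal_density b s c" for c
  proof -
    have "2*pi* s^2 = pi/a" using a by (simp add: s2)
    moreover have "-((c-b)^2)/(2* s^2) = -a*(c-b)^2" using a by (simp add: s2)
    ultimately show ?thesis unfolding normal_density_def using a
      by (simp add: real_sqrt_divide)
  qed
  have "(\<integral>\<^sup>+c. ennreal (exp (-a*(c-b)^2)) \<partial>lborel) = (\<integral>\<^sup>+c. ennreal (sqrt (pi/a)) * ennreal (normal_density b s c) \<partial>lborel)"
    by (rule nn_integral_cong) (subst pw, use a in \<open>simp add: ennreal_mult\<close>)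
  also have "\<dots> = ennreal (sqrt (pi/a))"
    by (subst nn_integral_cmult) (simp_all add: nn_integral_normal_density_1[OF s])
  finally show ?thesis .
qed

lemma filterlim_lin_at_top:
  fixes v :: real assumes "0 < v"
  shows "filterlim (\<lambda>t. 1 + v * t) at_top at_top"
  by (rule filterlim_tendsto_add_at_top[OF tendsto_const])
     (rule filterlim_tendsto_pos_mult_at_top[OF tendsto_const assms filterlim_ident])

lemma emeasure_lborel_Ici_infty: "emeasure lborel {(a::real)..} = \<infinity>"
proof (rule ccontr)
  assume "emeasure lborel {a..} \<noteq> \<infinity>"
  then obtain r where r: "emeasure lborel {a..} = ennreal r" "0 \<le> r"
    by (metis ennreal_cases infinity_ennreal_def)
  have "emeasure lborel {a..a + r + 1} \<le> emeasure lborel {a..}"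
    by (rule emeasure_mono) auto
  then have "ennreal (r + 1) \<le> ennreal r" using r by simp
  then show False using r by (simp add: ennreal_le_iff)
qed

lemma laplace_inv:
  fixes T :: real assumes T: "0 \<le> T"
  shows "(\<integral>\<^sup>+t. ennreal (exp (-t*T)) * indicator {0..} t \<partial>lborel) = (if T = 0 then \<infinity> else ennreal (1/T))"
proof (cases "T = 0")
  case True
  then show ?thesis by (simp add: emeasure_lborel_Ici_infty)
next
  case False
  then have T: "0 < T" using T by simp
  have lim: "((\<lambda>t. - exp (-t*T) / T) \<longlongrightarrow> - 0 / T) at_top"
  proof (intro tendsto_intros)
    have "filterlim (\<lambda>t. -t*T) at_bot at_top"
      using filterlim_tendsto_pos_mult_at_top[OF tendsto_const T filterlim_ident]
      by (simp add: filterlim_uminus_at_bot mult.commute)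
    then show "((\<lambda>t. exp (-t*T)) \<longlongrightarrow> 0) at_top"
      by (rule filterlim_compose[OF exp_at_bot])
    show "T \<noteq> 0" using T by simp
  qed
  have der: "DERIV (\<lambda>t. - exp (-t*T) / T) t :> exp (-t*T)" for t
    using T by (auto intro!: derivative_eq_intros)
  have "(\<integral>\<^sup>+t. ennreal (exp (-t*T)) * indicator {0..} t \<partial>lborel) = ennreal (- 0 / T - (- exp (-0*T)/T))"
    by (rule nn_integral_FTC_atLeast[OF _ der _ lim]) auto
  then show ?thesis using T False by simp
qed

lemma int_upper:
  fixes v c :: real assumes v: "0 < v" and c: "0 < c"
  shows "(\<integral>\<^sup>+t. ennreal (exp (-c * (v * t/(1+v * t))) / (1+v * t)^2) * indicator {0..} t \<partial>lborel)
     = ennreal ((1 - exp (-c)) / (v * c))"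
proof -
  have vc: "v * c \<noteq> 0" using v c by simp
  have lim1: "((\<lambda>t. v * t/(1+v * t)) \<longlongrightarrow> 1) at_top"
  proof -
    have "((\<lambda>t. 1 - inverse (1+v * t)) \<longlongrightarrow> 1 - 0) at_top"
      by (intro tendsto_intros tendsto_inverse_0_at_top filterlim_lin_at_top v)
    moreover have "eventually (\<lambda>t. 1 - inverse (1+v * t) = v * t/(1+v * t)) at_top"
      using eventually_ge_at_top[of 0]
    proof eventually_elim
      case (elim t)
      have "0 < 1 + v * t" using v elim by (simp add: add_pos_nonneg)
      then show ?case by (simp add: field_simps)
    qed
    ultimately show ?thesis by (simp add: tendsto_cong)
  qed
  have lim: "((\<lambda>t. - exp (-c * (v * t/(1+v * t))) / (v * c)) \<longlongrightarrow> - exp (-c * 1)/(v * c)) at_top"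
    by (intro tendsto_intros lim1 vc)
  have der: "DERIV (\<lambda>t. - exp (-c * (v * t/(1+v * t))) / (v * c)) t :> exp (-c * (v * t/(1+v * t))) / (1+v * t)^2"
    if t: "0 \<le> t" for t
  proof -
    have p: "0 < 1 + v * t" using v t by (simp add: add_pos_nonneg)
    have d1: "DERIV (\<lambda>t. v * t/(1+v * t)) t :> v / (1+v * t)^2"
      using p by (auto intro!: derivative_eq_intros simp: field_simps power2_eq_square)
    have d2: "DERIV (\<lambda>y. - exp (-c * y) / (v * c)) (v * t/(1+v * t)) :> exp (-c * (v * t/(1+v * t))) / v"
      using vc by (auto intro!: derivative_eq_intros simp: field_simps)
    have "DERIV (\<lambda>t. - exp (-c * (v * t/(1+v * t))) / (v * c)) t :> exp (-c * (v * t/(1+v * t))) / v * (v / (1+v * t)^2)"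
      by (rule DERIV_chain2[OF d2 d1])
    then show ?thesis using v by simp
  qed
  have "(\<integral>\<^sup>+t. ennreal (exp (-c * (v * t/(1+v * t))) / (1+v * t)^2) * indicator {0..} t \<partial>lborel)
     = ennreal (- exp (-c * 1)/(v * c) - (- exp (-c * (v * 0/(1+v * 0))) / (v * c)))"
    by (rule nn_integral_FTC_atLeast[OF _ der _ lim]) auto
  also have "- exp (-c * 1)/(v * c) - (- exp (-c * (v * 0/(1+v * 0))) / (v * c)) = (1 - exp (-c)) / (v * c)"
    by (simp add: diff_divide_distrib)
  finally show ?thesis .
qed

lemma int_lower:
  fixes v r :: real assumes v: "0 < v" and r: "1 < r"
  shows "(\<integral>\<^sup>+t. ennreal ((1+v * t) powr (-r)) * indicator {0..} t \<partial>lborel)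
     = ennreal (1 / (v * (r-1)))"
proof -
  have vr: "v * (r-1) \<noteq> 0" using v r by simp
  have lim: "((\<lambda>t. - ((1+v * t) powr (1-r)) / (v * (r-1))) \<longlongrightarrow> - 0 / (v * (r-1))) at_top"
    by (intro tendsto_intros tendsto_neg_powr filterlim_lin_at_top v vr) (use r in simp)
  have der: "DERIV (\<lambda>t. - ((1+v * t) powr (1-r)) / (v * (r-1))) t :> (1+v * t) powr (-r)"
    if t: "0 \<le> t" for t
  proof -
    have p: "0 < 1 + v * t" using v t by (simp add: add_pos_nonneg)
    have d1: "((\<lambda>x. x powr (1-r)) has_real_derivative (1-r) * (1+v * t) powr (1-r-1)) (at (1+v * t))"
      by (rule has_real_derivative_powr) (use p in simp)
    have d2: "((\<lambda>t. 1 + v * t) has_real_derivative v) (at t)"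
      by (auto intro!: derivative_eq_intros)
    have "DERIV (\<lambda>t. - ((1+v * t) powr (1-r)) / (v * (r-1))) t :>
        - ((1-r) * (1+v * t) powr (1-r-1) * v) / (v * (r-1))"
      by (intro DERIV_cdivide DERIV_minus DERIV_chain2[OF d1 d2])
    moreover have "- ((1-r) * (1+v * t) powr (1-r-1) * v) / (v * (r-1)) = (1+v * t) powr (-r)"
      using vr v r by (simp add: field_simps)
    ultimately show ?thesis by simp
  qed
  have "(\<integral>\<^sup>+t. ennreal ((1+v * t) powr (-r)) * indicator {0..} t \<partial>lborel)
     = ennreal (- 0 / (v * (r-1)) - (- ((1+v * 0) powr (1-r)) / (v * (r-1))))"
    by (rule nn_integral_FTC_atLeast[OF _ der _ lim]) auto
  then show ?thesis by simp
qed

declare sum.cl_ivl_Suc[simp del]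

lemma svar_cong: "(\<And>i. i \<in> {1..N+1} \<Longrightarrow> x i = y i) \<Longrightarrow> svar N x = svar N y"
proof -
  assume h: "\<And>i. i \<in> {1..N+1} \<Longrightarrow> x i = y i"
  have "sum x {1..N+1} = sum y {1..N+1}" by (rule sum.cong) (auto simp: h)
  then have "smean N x = smean N y" unfolding smean_def by simp
  then have "(\<Sum>i=1..N+1. (x i - smean N x)^2) = (\<Sum>i=1..N+1. (y i - smean N y)^2)"
    by (intro sum.cong) (auto simp: h)
  then show ?thesis unfolding svar_def by simp
qed

lemma smean_shift: "smean N (\<lambda>i. x i + c) = smean N x + c"
  unfolding smean_def by (simp add: sum.distrib field_simps)

lemma svar_shift: "svar N (\<lambda>i. x i + c) = svar N x"
  unfolding svar_def by (simp add: smean_shift)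

lemma smean_scale: "smean N (\<lambda>i. a * x i) = a * smean N x"
  unfolding smean_def by (simp add: sum_distrib_left[symmetric])

lemma svar_scale: "svar N (\<lambda>i. a * x i) = a^2 * svar N x"
proof -
  have "(\<Sum>i=1..N+1. (a * x i - a * smean N x)^2) = a^2 * (\<Sum>i=1..N+1. (x i - smean N x)^2)"
    by (simp add: sum_distrib_left power_mult_distrib right_diff_distrib[symmetric])
  then show ?thesis unfolding svar_def smean_scale by simp
qed

lemma svar_nonneg: "0 \<le> svar N x"
  unfolding svar_def by (simp add: sum_nonneg)

lemma sum_centered: "(\<Sum>i=1..N+1. (x i - smean N x)) = 0"
  unfolding smean_def by (simp add: sum_subtractf)

lemma N_svar: "real N * svar N x = (\<Sum>i=1..N+1. (x i - smean N x)^2)"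
proof (cases "N = 0")
  case True
  then show ?thesis by (simp add: smean_def sum.cl_ivl_Suc)
qed (simp add: svar_def)

lemma sum_sq_decomp:
  "(\<Sum>i=1..N+1. (x i - c)^2) = real N * svar N x + real (N+1) * (c - smean N x)^2"
proof -
  let ?m = "smean N x"
  have "(\<Sum>i=1..N+1. (x i - c)^2) = (\<Sum>i=1..N+1. (x i - ?m)^2 + 2 * (?m - c) * (x i - ?m) + (c - ?m)^2)"
    by (rule sum.cong) (auto simp: power2_eq_square algebra_simps)
  also have "\<dots> = (\<Sum>i=1..N+1. (x i - ?m)^2) + 2 * (?m - c) * (\<Sum>i=1..N+1. (x i - ?m)) + real (N+1) * (c - ?m)^2"
    by (simp add: sum.distrib sum_distrib_left)
  also have "\<dots> = real N * svar N x + real (N+1) * (c - ?m)^2"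
    unfolding sum_centered N_svar by simp
  finally show ?thesis .
qed

lemma gauss_int_c':
  fixes a b :: real
  assumes a: "0 < a"
  shows "(\<integral>\<^sup>+c. ennreal (exp (- (a*(c-b)^2))) \<partial>lborel) = ennreal (sqrt (pi/a))"
  using gauss_int_c[OF a, of b] by simp

lemma (in prob_space) gauss_sq_exp_E':
  assumes Z: "distributed M lborel Z (\<lambda>x. ennreal (normal_density 0 s x))"
    and s: "0 < s" and t: "0 \<le> t"
  shows "(\<integral>\<^sup>+\<omega>. ennreal (exp (- (t*(z + Z \<omega>)^2))) \<partial>M)
     = ennreal (exp (- (t*z^2/(1 + 2*t* s^2))) / sqrt (1 + 2*t* s^2))"
  using gauss_sq_exp_E[OF Z s t, of z] by simp

lemma (in prob_space) E_exp_T: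
  fixes N :: nat and e :: "nat \<Rightarrow> 'a \<Rightarrow> real" and \<mu> :: "nat \<Rightarrow> real"
  assumes s: "0 < s" and Nev: "even N"
    and meas[measurable]: "\<And>i. e i \<in> borel_measurable M"
    and indep: "indep_vars (\<lambda>_. borel) e {1..N+1}"
    and distr: "\<And>i. i \<in> {1..N+1} \<Longrightarrow> distributed M lborel (e i) (\<lambda>x. ennreal (normal_density 0 s x))"
    and t: "0 < t"
  shows "(\<integral>\<^sup>+\<omega>. ennreal (exp (-t * (real N * svar N (\<lambda>i. \<mu> i + e i \<omega>)))) \<partial>M)
       = ennreal (exp (-t * (real N * svar N \<mu>) / (1+2*t* s^2)) / (1+2*t* s^2)^(N div 2))"
proof -
  define n1 where "n1 = real (N+1)"
  define u where "u = 1+2*t* s^2"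
  have u: "0 < u" unfolding u_def using t by (simp add: add_pos_nonneg)
  have n1: "0 < n1" unfolding n1_def by simp
  let ?S = "{1..N+1}"
  define F where "F c \<omega> = (\<Prod>i\<in>?S. ennreal (exp (-t * (\<mu> i - c + e i \<omega>)^2)))" for c \<omega>
  have Fm[measurable]: "case_prod F \<in> borel_measurable (lborel \<Otimes>\<^sub>M M)"
    unfolding F_def case_prod_beta' by measurable
  have step1: "ennreal (exp (-t * (real N * svar N (\<lambda>i. \<mu> i + e i \<omega>))))
      = ennreal (sqrt (t*n1/pi)) * (\<integral>\<^sup>+c. F c \<omega> \<partial>lborel)" for \<omega>
  proof -
    let ?y = "\<lambda>i. \<mu> i + e i \<omega>"
    let ?T = "real N * svar N ?y"
    have "F c \<omega> = ennreal (exp (-t * ?T)) * ennreal (exp (- (t*n1) * (c - smean N ?y)^2))" for c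
    proof -
      have "F c \<omega> = ennreal (\<Prod>i\<in>?S. exp (-t * (\<mu> i - c + e i \<omega>)^2))"
        unfolding F_def by (rule prod_ennreal) simp
      also have "(\<Prod>i\<in>?S. exp (-t * (\<mu> i - c + e i \<omega>)^2)) = exp (\<Sum>i\<in>?S. -t * (?y i - c)^2)"
        by (simp add: exp_sum algebra_simps)
      also have "(\<Sum>i\<in>?S. -t * (?y i - c)^2) = -t * ?T + (- (t*n1) * (c - smean N ?y)^2)"
      proof -
        have d: "(\<Sum>i\<in>?S. (?y i - c)^2) = ?T + n1 * (c - smean N ?y)^2"
          unfolding n1_def by (rule sum_sq_decomp)
        have "(\<Sum>i\<in>?S. -t * (?y i - c)^2) = -t * (\<Sum>i\<in>?S. (?y i - c)^2)"
          by (simp only: sum_distrib_left)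
        also have "\<dots> = -t * ?T + (- (t*n1) * (c - smean N ?y)^2)"
          unfolding d by (simp add: algebra_simps)
        finally show ?thesis .
      qed
      finally have "F c \<omega> = ennreal (exp (-t * ?T) * exp (- (t*n1) * (c - smean N ?y)^2))"
        by (simp only: exp_add)
      then show ?thesis by (simp add: ennreal_mult)
    qed
    then have "(\<integral>\<^sup>+c. F c \<omega> \<partial>lborel) = ennreal (exp (-t * ?T)) * ennreal (sqrt (pi/(t*n1)))"
      using t n1 by (simp add: nn_integral_cmult gauss_int_c')
    then have "ennreal (sqrt (t*n1/pi)) * (\<integral>\<^sup>+c. F c \<omega> \<partial>lborel)
        = ennreal (exp (-t * ?T)) * ennreal (sqrt (t*n1/pi) * sqrt (pi/(t*n1)))"
      using t n1 by (simp add: ennreal_mult mult_ac)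
    also have "sqrt (t*n1/pi) * sqrt (pi/(t*n1)) = 1"
      using t n1 by (simp add: real_sqrt_mult[symmetric])
    finally show ?thesis by simp
  qed
  interpret P: pair_sigma_finite lborel M
    by (intro pair_sigma_finite.intro sigma_finite_lborel prob_space_imp_sigma_finite prob_space_axioms)
  have step2: "(\<integral>\<^sup>+\<omega>. F c \<omega> \<partial>M) = ennreal ((1/sqrt u)^(N+1) * exp (- (t/u) * (real N * svar N \<mu>)))
       * ennreal (exp (- (t*n1/u) * (c - smean N \<mu>)^2))" for c
  proof -
    have ind: "indep_vars (\<lambda>_. borel) (\<lambda>i \<omega>. ennreal (exp (-t * (\<mu> i - c + e i \<omega>)^2))) ?S"
      by (rule indep_vars_compose2[OF indep]) simp
    have "(\<integral>\<^sup>+\<omega>. F c \<omega> \<partial>M) = (\<Prod>i\<in>?S. \<integral>\<^sup>+\<omega>. ennreal (exp (-t * (\<mu> i - c + e i \<omega>)^2)) \<partial>M)"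
      unfolding F_def by (rule indep_vars_nn_integral[OF _ ind]) auto
    also have "\<dots> = (\<Prod>i\<in>?S. ennreal (exp (-t*(\<mu> i - c)^2/u) / sqrt u))"
      by (rule prod.cong[OF refl]) (simp add: gauss_sq_exp_E'[OF distr s less_imp_le[OF t]] u_def)
    also have "\<dots> = ennreal (\<Prod>i\<in>?S. exp (-t*(\<mu> i - c)^2/u) / sqrt u)"
      by (rule prod_ennreal) (use u in simp)
    also have "(\<Prod>i\<in>?S. exp (-t*(\<mu> i - c)^2/u) / sqrt u) = (1/sqrt u)^(N+1) * exp (\<Sum>i\<in>?S. - (t/u) * (\<mu> i - c)^2)"
      by (simp add: exp_sum prod.distrib prod_dividef divide_inverse power_one_over mult_ac)
    also have "(\<Sum>i\<in>?S. - (t/u) * (\<mu> i - c)^2) = - (t/u) * (real N * svar N \<mu>) + (- (t*n1/u) * (c - smean N \<mu>)^2)"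
    proof -
      have d: "(\<Sum>i\<in>?S. (\<mu> i - c)^2) = real N * svar N \<mu> + n1 * (c - smean N \<mu>)^2"
        unfolding n1_def by (rule sum_sq_decomp)
      have "(\<Sum>i\<in>?S. - (t/u) * (\<mu> i - c)^2) = - (t/u) * (\<Sum>i\<in>?S. (\<mu> i - c)^2)"
        by (simp only: sum_distrib_left)
      also have "\<dots> = - (t/u) * (real N * svar N \<mu>) + (- (t*n1/u) * (c - smean N \<mu>)^2)"
        unfolding d by (simp add: algebra_simps)
      finally show ?thesis .
    qed
    finally have fin: "(\<integral>\<^sup>+\<omega>. F c \<omega> \<partial>M) = ennreal (((1/sqrt u)^(N+1) * exp (- (t/u) * (real N * svar N \<mu>))) * exp (- (t*n1/u) * (c - smean N \<mu>)^2))"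
      by (simp only: exp_add mult.assoc)
    have X0: "0 \<le> (1/sqrt u)^(N+1) * exp (- (t/u) * (real N * svar N \<mu>))" using u by simp
    show ?thesis using fin[unfolded ennreal_mult[OF X0 exp_ge_zero]] .
  qed
  have "(\<integral>\<^sup>+\<omega>. ennreal (exp (-t * (real N * svar N (\<lambda>i. \<mu> i + e i \<omega>)))) \<partial>M)
      = (\<integral>\<^sup>+\<omega>. ennreal (sqrt (t*n1/pi)) * (\<integral>\<^sup>+c. F c \<omega> \<partial>lborel) \<partial>M)"
    by (rule nn_integral_cong) (rule step1)
  also have "\<dots> = ennreal (sqrt (t*n1/pi)) * (\<integral>\<^sup>+\<omega>. (\<integral>\<^sup>+c. F c \<omega> \<partial>lborel) \<partial>M)"
    by (rule nn_integral_cmult) measurable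
  also have "(\<integral>\<^sup>+\<omega>. (\<integral>\<^sup>+c. F c \<omega> \<partial>lborel) \<partial>M) = (\<integral>\<^sup>+c. (\<integral>\<^sup>+\<omega>. F c \<omega> \<partial>M) \<partial>lborel)"
    by (rule P.Fubini'[OF Fm])
  also have "\<dots> = ennreal ((1/sqrt u)^(N+1) * exp (- (t/u) * (real N * svar N \<mu>))) * ennreal (sqrt (pi/(t*n1/u)))"
  proof -
    have g: "(\<integral>\<^sup>+c. ennreal (exp (- (t*n1/u) * (c - smean N \<mu>)^2)) \<partial>lborel) = ennreal (sqrt (pi/(t*n1/u)))"
      by (rule gauss_int_c) (use t n1 u in simp)
    show ?thesis
      apply (subst step2)
      apply (subst nn_integral_cmult)
       apply measurable
      apply (subst g)
      apply (rule refl)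
      done
  qed
  finally have "(\<integral>\<^sup>+\<omega>. ennreal (exp (-t * (real N * svar N (\<lambda>i. \<mu> i + e i \<omega>)))) \<partial>M)
      = ennreal (sqrt (t*n1/pi) * sqrt (pi/(t*n1/u)) * (1/sqrt u)^(N+1) * exp (- (t/u) * (real N * svar N \<mu>)))"
    using t n1 u by (simp add: ennreal_mult[symmetric] mult_ac)
  also have "sqrt (t*n1/pi) * sqrt (pi/(t*n1/u)) = sqrt u"
    using t n1 u by (simp add: real_sqrt_mult[symmetric])
  also have "sqrt u * (1/sqrt u)^(N+1) = 1 / u^(N div 2)"
  proof -
    have "sqrt u * (1/sqrt u)^(N+1) = 1 / (sqrt u)^N" using u by (simp add: power_one_over)
    also have "(sqrt u)^N = u^(N div 2)"
      using Nev u by (metis dvd_mult_div_cancel power_mult real_sqrt_pow2 less_imp_le)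
    finally show ?thesis .
  qed
  finally show ?thesis unfolding u_def
    by (simp add: field_simps)
qed

lemma ln_lower_frac: fixes u :: real assumes "1 \<le> u" shows "(u - 1)/u \<le> ln u"
proof -
  have u: "0 < u" using assms by simp
  have "ln (1/u) \<le> 1/u - 1" by (rule ln_le_minus_one) (use u in simp)
  then have "- ln u \<le> 1/u - 1" using u by (simp add: ln_div)
  then show ?thesis using u by (simp add: field_simps)
qed

lemma h_upper:
  fixes v t Q :: real and K :: nat
  assumes v: "0 < v" and t: "0 \<le> t" and Q: "0 \<le> Q" and K: "2 \<le> K"
  shows "exp (-t * Q / (1 + v * t)) / (1 + v * t)^K
     \<le> exp (- ((real K - 2) + Q / v) * (v * t / (1 + v * t))) / (1 + v * t)^2"
proof -
  define u where "u = 1 + v * t"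
  have u1: "1 \<le> u" unfolding u_def using v t by simp
  have u: "0 < u" using u1 by simp
  have vt: "v * t / u = (u - 1) / u" unfolding u_def by simp
  have l: "v * t / u \<le> ln u" unfolding vt by (rule ln_lower_frac[OF u1])
  have pK: "u^K = u^2 * u^(K-2)" using K by (metis le_add_diff_inverse power_add)
  have "u^(K-2) = exp (real (K-2) * ln u)" using u by (simp add: exp_of_nat_mult)
  also have "\<dots> \<ge> exp (real (K-2) * (v * t / u))"
    using l by (intro exp_le_cancel_iff[THEN iffD2] mult_left_mono) auto
  finally have uK2: "exp (real (K-2) * (v * t / u)) \<le> u^(K-2)" .
  have "exp (-t * Q / u) / u^K = exp (-t * Q / u) / u^(K-2) / u^2"
    by (simp add: pK field_simps)
  also have "\<dots> \<le> exp (-t * Q / u) / exp (real (K-2) * (v * t / u)) / u^2"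
    using uK2 u by (intro divide_right_mono divide_left_mono) auto
  also have "exp (-t * Q / u) / exp (real (K-2) * (v * t / u)) = exp (- ((real K - 2) + Q / v) * (v * t / u))"
    using v u K by (simp add: exp_diff[symmetric] of_nat_diff field_simps)
  finally show ?thesis unfolding u_def .
qed

lemma h_lower:
  fixes v t Q :: real and K :: nat
  assumes v: "0 < v" and t: "0 \<le> t" and Q: "0 \<le> Q"
  shows "(1 + v * t) powr (- (real K + Q / v)) \<le> exp (-t * Q / (1 + v * t)) / (1 + v * t)^K"
proof -
  define u where "u = 1 + v * t"
  have u1: "1 \<le> u" unfolding u_def using v t by simp
  have u: "0 < u" using u1 by simp
  have vt: "v * t / u = (u - 1) / u" unfolding u_def by simp
  have l: "v * t / u \<le> ln u" unfolding vt by (rule ln_lower_frac[OF u1])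
  have e1: "u^K = exp (real K * ln u)" using u by (simp add: exp_of_nat_mult)
  have "u powr (- (real K + Q / v)) = exp (- (Q / v) * ln u - real K * ln u)"
    using u by (simp add: powr_def algebra_simps)
  also have "\<dots> = exp (- (Q / v) * ln u) / u^K"
    unfolding e1 by (rule exp_diff)
  also have "\<dots> \<le> exp (-t * Q / u) / u^K"
  proof (intro divide_right_mono)
    have "(Q / v) * (v * t / u) \<le> (Q / v) * ln u"
      using l Q v by (intro mult_left_mono) auto
    moreover have "(Q / v) * (v * t / u) = t * Q / u" using v by simp
    ultimately have "t * Q / u \<le> (Q / v) * ln u" using v by (simp add: mult.commute)
    then show "exp (- (Q / v) * ln u) \<le> exp (-t * Q / u)" by simp
  qed (use u in simp)
  finally show ?thesis unfolding u_def .
qed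

lemma (in prob_space) core:
  fixes N :: nat and \<epsilon> :: "nat \<Rightarrow> 'a \<Rightarrow> real" and \<mu> :: "nat \<Rightarrow> real"
  assumes s: "0 < s" and Nev: "even N" and N6: "6 \<le> N"
    and indep: "indep_vars (\<lambda>_. borel) \<epsilon> {1..N+1}"
    and distr: "\<And>i. i \<in> {1..N+1} \<Longrightarrow> distributed M lborel (\<epsilon> i) (\<lambda>x. ennreal (normal_density 0 s x))"
  shows "ennreal (1/(svar N \<mu> + s^2)) \<le> (\<integral>\<^sup>+\<omega>. ennreal (1 / svar N (\<lambda>i. \<mu> i + \<epsilon> i \<omega>)) \<partial>M)
       \<and> (\<integral>\<^sup>+\<omega>. ennreal (1 / svar N (\<lambda>i. \<mu> i + \<epsilon> i \<omega>)) \<partial>M) \<le> ennreal ((1 + 12/N) / (svar N \<mu> + s^2))"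
proof -
  let ?S = "{1..N+1}"
  define e where "e i = (if i \<in> ?S then \<epsilon> i else (\<lambda>_. 0))" for i
  have meas[measurable]: "e i \<in> borel_measurable M" for i
  proof (cases "i \<in> ?S")
    case True
    then show ?thesis using distributed_measurable[OF distr[OF True]] by (simp add: e_def)
  qed (auto simp: e_def)
  have indep': "indep_vars (\<lambda>_. borel) e ?S"
    using indep by (rule indep_vars_cong[THEN iffD1, rotated -1]) (auto simp: e_def)
  have distr': "distributed M lborel (e i) (\<lambda>x. ennreal (normal_density 0 s x))" if "i \<in> ?S" for i
    using distr[OF that] that by (simp add: e_def)
  have sv: "svar N (\<lambda>i. \<mu> i + \<epsilon> i \<omega>) = svar N (\<lambda>i. \<mu> i + e i \<omega>)" for \<omega>
    by (rule svar_cong) (simp add: e_def)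
  define T where "T \<omega> = real N * svar N (\<lambda>i. \<mu> i + e i \<omega>)" for \<omega>
  have Tm[measurable]: "T \<in> borel_measurable M"
    unfolding T_def svar_def smean_def by measurable
  have T0: "0 \<le> T \<omega>" for \<omega> unfolding T_def by (simp add: svar_nonneg)
  define P where "P = svar N \<mu>"
  have P0: "0 \<le> P" unfolding P_def by (rule svar_nonneg)
  define Q where "Q = real N * P"
  have Q0: "0 \<le> Q" unfolding Q_def using P0 by simp
  define K where "K = N div 2"
  have NK: "real N = 2 * real K" unfolding K_def using Nev by (metis dvd_mult_div_cancel of_nat_mult of_nat_numeral)
  have K3: "3 \<le> K" unfolding K_def using N6 by simp
  define v where "v = 2 * s^2"
  have v: "0 < v" unfolding v_def using s by simp
  define h where "h t = exp (-t * Q / (1 + v * t)) / (1 + v * t)^K" for t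
  define L where "L \<omega> = (if T \<omega> = 0 then \<infinity> else ennreal (1 / T \<omega>))" for \<omega>
  have Lm[measurable]: "L \<in> borel_measurable M" unfolding L_def by measurable
  have Leq: "L \<omega> = (\<integral>\<^sup>+t. ennreal (exp (-t * T \<omega>)) * indicator {0..} t \<partial>lborel)" for \<omega>
    unfolding L_def by (rule laplace_inv[OF T0, symmetric])
  interpret P: pair_sigma_finite lborel M
    by (intro pair_sigma_finite.intro sigma_finite_lborel prob_space_imp_sigma_finite prob_space_axioms)
  have Eh: "(\<integral>\<^sup>+\<omega>. ennreal (exp (-t * T \<omega>)) \<partial>M) = ennreal (h t)" if t: "0 \<le> t" for t
  proof (cases "t = 0")
    case True
    then show ?thesis by (simp add: h_def emeasure_space_1)
  next
    case False
    then have "0 < t" using t by simp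
    from E_exp_T[OF s Nev meas indep' distr' this, of \<mu>]
    show ?thesis unfolding T_def h_def Q_def P_def v_def K_def by (simp add: mult_ac)
  qed
  have IL: "(\<integral>\<^sup>+\<omega>. L \<omega> \<partial>M) = (\<integral>\<^sup>+t. ennreal (h t) * indicator {0..} t \<partial>lborel)"
  proof -
    have "(\<integral>\<^sup>+\<omega>. L \<omega> \<partial>M) = (\<integral>\<^sup>+\<omega>. (\<integral>\<^sup>+t. ennreal (exp (-t * T \<omega>)) * indicator {0..} t \<partial>lborel) \<partial>M)"
      by (simp add: Leq)
    also have "\<dots> = (\<integral>\<^sup>+t. (\<integral>\<^sup>+\<omega>. ennreal (exp (-t * T \<omega>)) * indicator {0..} t \<partial>M) \<partial>lborel)"
      by (rule P.Fubini') measurable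
    also have "\<dots> = (\<integral>\<^sup>+t. ennreal (h t) * indicator {0..} t \<partial>lborel)"
    proof (rule nn_integral_cong)
      fix t :: real
      show "(\<integral>\<^sup>+\<omega>. ennreal (exp (-t * T \<omega>)) * indicator {0..} t \<partial>M) = ennreal (h t) * indicator {0..} t"
        by (cases "0 \<le> t") (simp_all add: nn_integral_multc Eh[simplified])
    qed
    finally show ?thesis .
  qed
  define c where "c = (real K - 2) + Q / v"
  have Qv: "0 \<le> Q / v" using Q0 v by simp
  have K3r: "(3::real) \<le> real K" using K3 by simp
  have c: "0 < c" unfolding c_def using K3r Qv by linarith
  have up: "(\<integral>\<^sup>+\<omega>. L \<omega> \<partial>M) \<le> ennreal (1 / (v * c))"
  proof -
    have "(\<integral>\<^sup>+t. ennreal (h t) * indicator {0..} t \<partial>lborel)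
        \<le> (\<integral>\<^sup>+t. ennreal (exp (-c * (v * t/(1+v * t))) / (1+v * t)^2) * indicator {0..} t \<partial>lborel)"
    proof (rule nn_integral_mono)
      fix t :: real
      show "ennreal (h t) * indicator {0..} t \<le> ennreal (exp (-c * (v * t/(1+v * t))) / (1+v * t)^2) * indicator {0..} t"
      proof (cases "0 \<le> t")
        case True
        have "h t \<le> exp (-c * (v * t/(1+v * t))) / (1+v * t)^2"
          unfolding h_def c_def using h_upper[OF v True Q0, of K] K3 by simp
        then show ?thesis using True by (simp add: ennreal_leI)
      qed simp
    qed
    also have "\<dots> = ennreal ((1 - exp (-c)) / (v * c))" by (rule int_upper[OF v c])
    also have "\<dots> \<le> ennreal (1 / (v * c))"
      using v c by (intro ennreal_leI divide_right_mono) auto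
    finally show ?thesis unfolding IL .
  qed
  define r where "r = real K + Q / v"
  have r: "1 < r" unfolding r_def using K3r Qv by linarith
  have lo: "ennreal (1 / (v * (r - 1))) \<le> (\<integral>\<^sup>+\<omega>. L \<omega> \<partial>M)"
  proof -
    have "ennreal (1 / (v * (r - 1))) = (\<integral>\<^sup>+t. ennreal ((1+v * t) powr (-r)) * indicator {0..} t \<partial>lborel)"
      by (rule int_lower[OF v r, symmetric])
    also have "\<dots> \<le> (\<integral>\<^sup>+t. ennreal (h t) * indicator {0..} t \<partial>lborel)"
    proof (rule nn_integral_mono)
      fix t :: real
      show "ennreal ((1+v * t) powr (-r)) * indicator {0..} t \<le> ennreal (h t) * indicator {0..} t"
      proof (cases "0 \<le> t")
        case True
        have "(1+v * t) powr (-r) \<le> h t"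
          unfolding h_def r_def using h_lower[OF v True Q0, of K] by simp
        then show ?thesis using True by (simp add: ennreal_leI)
      qed simp
    qed
    finally show ?thesis unfolding IL .
  qed
  have pw: "ennreal (1 / svar N (\<lambda>i. \<mu> i + \<epsilon> i \<omega>)) = ennreal (real N) * ennreal (1 / T \<omega>)" for \<omega>
  proof -
    have "1 / svar N (\<lambda>i. \<mu> i + \<epsilon> i \<omega>) = real N * (1 / T \<omega>)"
      unfolding sv T_def using N6 by simp
    moreover have "ennreal (real N * (1 / T \<omega>)) = ennreal (real N) * ennreal (1 / T \<omega>)"
      by (rule ennreal_mult) (simp_all add: T0)
    ultimately show ?thesis by simp
  qed
  have int_eq: "(\<integral>\<^sup>+\<omega>. ennreal (1 / svar N (\<lambda>i. \<mu> i + \<epsilon> i \<omega>)) \<partial>M) = ennreal (real N) * (\<integral>\<^sup>+\<omega>. ennreal (1 / T \<omega>) \<partial>M)"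
    unfolding pw by (rule nn_integral_cmult) measurable
  have TL: "ennreal (1 / T \<omega>) \<le> L \<omega>" for \<omega> unfolding L_def by simp
  have fin: "(\<integral>\<^sup>+\<omega>. L \<omega> \<partial>M) \<noteq> \<infinity>"
    using up by (auto simp: top_unique)
  have AEL: "AE \<omega> in M. L \<omega> \<noteq> \<infinity>" by (rule nn_integral_PInf_AE[OF Lm fin])
  have AEeq: "AE \<omega> in M. ennreal (1 / T \<omega>) = L \<omega>"
    using AEL by eventually_elim (simp add: L_def split: if_splits)
  have eqL: "(\<integral>\<^sup>+\<omega>. ennreal (1 / T \<omega>) \<partial>M) = (\<integral>\<^sup>+\<omega>. L \<omega> \<partial>M)"
    by (rule nn_integral_cong_AE[OF AEeq])
  have vc: "v * c = s^2 * (real N - 4) + real N * P"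
    unfolding v_def c_def Q_def using s NK by (simp add: field_simps)
  have vr: "v * (r - 1) = s^2 * (real N - 2) + real N * P"
    unfolding v_def r_def Q_def using s NK by (simp add: field_simps)
  have Npos: "0 < real N" using N6 by simp
  have "ennreal (1/(P + s^2)) \<le> ennreal (real N / (v * (r - 1)))"
  proof (rule ennreal_leI)
    have d1: "0 < P + s^2" using P0 s by (simp add: add_nonneg_pos)
    have d2: "0 < v * (r - 1)" using v r by simp
    have "v * (r - 1) \<le> real N * (P + s^2)" unfolding vr using s by (simp add: algebra_simps)
    then show "1/(P + s^2) \<le> real N / (v * (r - 1))"
      using d1 d2 by (simp add: field_simps)
  qed
  also have "ennreal (real N / (v * (r - 1))) = ennreal (real N) * ennreal (1 / (v * (r - 1)))"
    using v r by (simp add: ennreal_mult[symmetric] divide_inverse)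
  also have "\<dots> \<le> ennreal (real N) * (\<integral>\<^sup>+\<omega>. L \<omega> \<partial>M)"
    by (rule mult_left_mono[OF lo]) simp
  finally have low: "ennreal (1/(P + s^2)) \<le> (\<integral>\<^sup>+\<omega>. ennreal (1 / svar N (\<lambda>i. \<mu> i + \<epsilon> i \<omega>)) \<partial>M)"
    unfolding int_eq eqL .
  have "(\<integral>\<^sup>+\<omega>. ennreal (1 / svar N (\<lambda>i. \<mu> i + \<epsilon> i \<omega>)) \<partial>M) \<le> ennreal (real N) * ennreal (1 / (v * c))"
    unfolding int_eq eqL by (rule mult_left_mono[OF up]) simp
  also have "\<dots> = ennreal (real N / (v * c))"
    using v c by (simp add: ennreal_mult[symmetric] divide_inverse)
  also have "\<dots> \<le> ennreal ((1 + 12/N) / (P + s^2))"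
  proof (rule ennreal_leI)
    have d1: "0 < P + s^2" using P0 s by (simp add: add_nonneg_pos)
    have d2: "0 < v * c" using v c by simp
    have key: "real N * (P + s^2) \<le> (1 + 12 / real N) * (v * c)"
    proof -
      have a: "real N * s^2 \<le> (1 + 12 / real N) * (s^2 * (real N - 4))"
      proof -
        have "real N * real N \<le> (real N + 12) * (real N - 4)" using N6 by (simp add: algebra_simps)
        then have "real N \<le> (1 + 12 / real N) * (real N - 4)" using Npos by (simp add: field_simps)
        then show ?thesis using s by (metis mult.assoc mult.left_commute mult_left_mono zero_le_power2 mult.commute)
      qed
      have b: "real N * P \<le> (1 + 12 / real N) * (real N * P)"
        using P0 Npos by (simp add: algebra_simps)
      show ?thesis unfolding vc using a b by (simp add: algebra_simps)
    qed
    show "real N / (v * c) \<le> (1 + 12 / real N) / (P + s^2)"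
      using key d1 d2 by (simp add: field_simps)
  qed
  finally show ?thesis using low unfolding P_def by simp
qed

lemma intind: "A \<in> sets M \<Longrightarrow> integrable M f \<Longrightarrow> integrable M (\<lambda>x. indicator A x * (f x :: real))"
  using integrable_real_mult_indicator[of A M f] by (simp add: mult.commute)

lemma cond_exp_bounds:
  fixes f :: "'a \<Rightarrow> real"
  assumes PS: "prob_space M" and sub: "subalgebra M F"
    and fm[measurable]: "f \<in> borel_measurable M" and f0: "\<And>\<omega>. 0 \<le> f \<omega>"
    and c1: "0 \<le> c1" and c2: "0 \<le> c2"
    and bnd: "\<And>A. A \<in> sets F \<Longrightarrow> ennreal c1 * emeasure M A \<le> (\<integral>\<^sup>+\<omega>. indicator A \<omega> * ennreal (f \<omega>) \<partial>M)
                  \<and> (\<integral>\<^sup>+\<omega>. indicator A \<omega> * ennreal (f \<omega>) \<partial>M) \<le> ennreal c2 * emeasure M A"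
  shows "AE \<omega> in M. c1 \<le> real_cond_exp M F f \<omega> \<and> real_cond_exp M F f \<omega> \<le> c2"
proof -
  interpret prob_space M by (rule PS)
  interpret sigma_finite_subalgebra M F
    by (rule sigma_finite_subalgebra.intro[OF sub prob_space_imp_sigma_finite[OF prob_space_restr_to_subalg[OF sub PS]]])
  have spF: "space F = space M" using sub by (simp add: subalgebra_def)
  have setsF: "A \<in> sets F \<Longrightarrow> A \<in> sets M" for A using sub by (auto simp: subalgebra_def)
  have "space M \<in> sets F" using sets.top[of F] spF by simp
  from bnd[OF this] have "(\<integral>\<^sup>+\<omega>. indicator (space M) \<omega> * ennreal (f \<omega>) \<partial>M) \<le> ennreal c2 * emeasure M (space M)"
    by simp
  moreover have "(\<integral>\<^sup>+\<omega>. indicator (space M) \<omega> * ennreal (f \<omega>) \<partial>M) = (\<integral>\<^sup>+\<omega>. ennreal (f \<omega>) \<partial>M)"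
    by (rule nn_integral_cong) simp
  ultimately have "(\<integral>\<^sup>+\<omega>. ennreal (f \<omega>) \<partial>M) < \<infinity>"
    using emeasure_space_1 by (simp add: less_top[symmetric] top_unique) (metis ennreal_neq_top top.not_eq_extremum order.strict_trans1)
  then have intf[measurable]: "integrable M f"
    by (intro integrableI_nonneg) (auto simp: f0)
  let ?h = "real_cond_exp M F f"
  have inth: "integrable M ?h" by (rule real_cond_exp_int(1)[OF intf])
  have setint: "c1 * measure M A \<le> (\<integral>\<omega>. indicator A \<omega> * f \<omega> \<partial>M) \<and> (\<integral>\<omega>. indicator A \<omega> * f \<omega> \<partial>M) \<le> c2 * measure M A"
    if A: "A \<in> sets F" for A
  proof -
    have AM[measurable]: "A \<in> sets M" using setsF[OF A] .
    have intA: "integrable M (\<lambda>\<omega>. indicator A \<omega> * f \<omega>)"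
      by (rule intind[OF AM intf])
    have eq: "(\<integral>\<^sup>+\<omega>. indicator A \<omega> * ennreal (f \<omega>) \<partial>M) = ennreal (\<integral>\<omega>. indicator A \<omega> * f \<omega> \<partial>M)"
    proof -
      have "(\<integral>\<^sup>+\<omega>. indicator A \<omega> * ennreal (f \<omega>) \<partial>M) = (\<integral>\<^sup>+\<omega>. ennreal (indicator A \<omega> * f \<omega>) \<partial>M)"
        by (rule nn_integral_cong) (simp add: indicator_def)
      also have "\<dots> = ennreal (\<integral>\<omega>. indicator A \<omega> * f \<omega> \<partial>M)"
        by (rule nn_integral_eq_integral[OF intA]) (simp add: f0)
      finally show ?thesis .
    qed
    have I0: "0 \<le> (\<integral>\<omega>. indicator A \<omega> * f \<omega> \<partial>M)" by (intro integral_nonneg_AE) (simp add: f0)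
    from bnd[OF A] show ?thesis unfolding eq emeasure_eq_measure
      using c1 c2 I0 by (simp add: ennreal_mult[symmetric] ennreal_le_iff)
  qed
  have hF[measurable]: "?h \<in> borel_measurable F" by simp
  define Z1 where "Z1 = {\<omega> \<in> space M. ?h \<omega> < c1}"
  have Z1F: "Z1 \<in> sets F" unfolding Z1_def spF[symmetric] by measurable
  have Z1M[measurable]: "Z1 \<in> sets M" using setsF[OF Z1F] .
  define Z2 where "Z2 = {\<omega> \<in> space M. c2 < ?h \<omega>}"
  have Z2F: "Z2 \<in> sets F" unfolding Z2_def spF[symmetric] by measurable
  have Z2M[measurable]: "Z2 \<in> sets M" using setsF[OF Z2F] .
  have hA: "(\<integral>\<omega>. indicator A \<omega> * ?h \<omega> \<partial>M) = (\<integral>\<omega>. indicator A \<omega> * f \<omega> \<partial>M)" if "A \<in> sets F" for A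
    using real_cond_exp_intA[OF intf that] by (simp add: set_lebesgue_integral_def mult.commute)
  have AE1: "AE \<omega> in M. \<omega> \<notin> Z1"
  proof -
    let ?k = "\<lambda>\<omega>. indicator Z1 \<omega> * (c1 - ?h \<omega>)"
    have intk: "integrable M ?k"
      by (rule intind[OF Z1M]) (auto intro!: integrable_diff inth)
    have k0: "AE \<omega> in M. 0 \<le> ?k \<omega>" by (auto simp: Z1_def indicator_def)
    have "(\<integral>\<omega>. ?k \<omega> \<partial>M) = c1 * measure M Z1 - (\<integral>\<omega>. indicator Z1 \<omega> * ?h \<omega> \<partial>M)"
    proof -
      have "(\<integral>\<omega>. ?k \<omega> \<partial>M) = (\<integral>\<omega>. c1 * indicator Z1 \<omega> - indicator Z1 \<omega> * ?h \<omega> \<partial>M)"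
        by (simp add: algebra_simps)
      also have "\<dots> = (\<integral>\<omega>. c1 * indicator Z1 \<omega> \<partial>M) - (\<integral>\<omega>. indicator Z1 \<omega> * ?h \<omega> \<partial>M)"
        by (rule Bochner_Integration.integral_diff) (auto intro!: intind[OF Z1M inth] integrable_mult_right integrable_real_indicator simp: Z1M emeasure_eq_measure)
      finally show ?thesis by simp
    qed
    also have "\<dots> \<le> 0" using setint[OF Z1F] hA[OF Z1F] by simp
    finally have "(\<integral>\<omega>. ?k \<omega> \<partial>M) = 0" using integral_nonneg_AE[OF k0] by simp
    then have "AE \<omega> in M. ?k \<omega> = 0" using integral_nonneg_eq_0_iff_AE[OF intk k0] by simp
    then show ?thesis by eventually_elim (auto simp: Z1_def indicator_def)
  qed
  have AE2: "AE \<omega> in M. \<omega> \<notin> Z2"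
  proof -
    let ?k = "\<lambda>\<omega>. indicator Z2 \<omega> * (?h \<omega> - c2)"
    have intk: "integrable M ?k"
      by (rule intind[OF Z2M]) (auto intro!: integrable_diff inth)
    have k0: "AE \<omega> in M. 0 \<le> ?k \<omega>" by (auto simp: Z2_def indicator_def)
    have "(\<integral>\<omega>. ?k \<omega> \<partial>M) = (\<integral>\<omega>. indicator Z2 \<omega> * ?h \<omega> \<partial>M) - c2 * measure M Z2"
    proof -
      have "(\<integral>\<omega>. ?k \<omega> \<partial>M) = (\<integral>\<omega>. indicator Z2 \<omega> * ?h \<omega> - c2 * indicator Z2 \<omega> \<partial>M)"
        by (simp add: algebra_simps)
      also have "\<dots> = (\<integral>\<omega>. indicator Z2 \<omega> * ?h \<omega> \<partial>M) - (\<integral>\<omega>. c2 * indicator Z2 \<omega> \<partial>M)"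
        by (rule Bochner_Integration.integral_diff) (auto intro!: intind[OF Z2M inth] integrable_mult_right integrable_real_indicator simp: Z2M emeasure_eq_measure)
      finally show ?thesis by simp
    qed
    also have "\<dots> \<le> 0" using setint[OF Z2F] hA[OF Z2F] by simp
    finally have "(\<integral>\<omega>. ?k \<omega> \<partial>M) = 0" using integral_nonneg_AE[OF k0] by simp
    then have "AE \<omega> in M. ?k \<omega> = 0" using integral_nonneg_eq_0_iff_AE[OF intk k0] by simp
    then show ?thesis by eventually_elim (auto simp: Z2_def indicator_def)
  qed
  show ?thesis using AE1 AE2 AE_space by eventually_elim (auto simp: Z1_def Z2_def)
qed

lemma measurable_component_any:
  "(\<lambda>r. r j) \<in> borel_measurable (PiM J (\<lambda>_. (borel :: real measure)))"
proof (cases "j \<in> J")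
  case True
  then show ?thesis by (rule measurable_component_singleton)
next
  case False
  have h: "\<And>r. r \<in> space (PiM J (\<lambda>_. (borel :: real measure))) \<Longrightarrow> r j = undefined"
    using False by (auto simp: space_PiM PiE_def extensional_def)
  have "(\<lambda>r::'a \<Rightarrow> real. r j) \<in> borel_measurable (PiM J (\<lambda>_. borel)) \<longleftrightarrow> (\<lambda>r::'a\<Rightarrow>real. undefined::real) \<in> borel_measurable (PiM J (\<lambda>_. borel))"
    by (rule measurable_cong) (rule h)
  then show ?thesis by simp
qed

lemma (in prob_space) eps_family:
  fixes Z :: "'i \<Rightarrow> 'a \<Rightarrow> real" and kv kw :: "nat \<Rightarrow> 'i"
  assumes indep: "indep_vars (\<lambda>_. borel) Z I"
    and kvI: "kv ` S \<subseteq> I" and kwI: "kw ` S \<subseteq> I"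
    and kvinj: "inj kv" and kwinj: "inj kw" and kvw: "\<And>i j. kv i \<noteq> kw j"
    and dv: "\<And>i. i \<in> S \<Longrightarrow> distributed M lborel (Z (kv i)) (\<lambda>x. ennreal (normal_density 0 1 x))"
    and dw: "\<And>i. i \<in> S \<Longrightarrow> distributed M lborel (Z (kw i)) (\<lambda>x. ennreal (normal_density 0 1 x))"
    and B: "B \<noteq> 0"
  shows "indep_vars (\<lambda>_. borel) (\<lambda>i \<omega>. a * Z (kv i) \<omega> + B * Z (kw i) \<omega>) S"
    and "\<And>i. i \<in> S \<Longrightarrow> distributed M lborel (\<lambda>\<omega>. a * Z (kv i) \<omega> + B * Z (kw i) \<omega>)
            (\<lambda>x. ennreal (normal_density 0 (sqrt (a^2 + B^2)) x))"
proof -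
  define K where "K i = {kv i, kw i}" for i
  have KI: "K i \<subseteq> I" if "i \<in> S" for i using that kvI kwI by (auto simp: K_def)
  have disj: "disjoint_family_on K S"
    unfolding disjoint_family_on_def K_def
    using kvinj kwinj kvw by (auto dest: injD)
  have r: "indep_vars (\<lambda>i. PiM (K i) (\<lambda>_. borel)) (\<lambda>i \<omega>. restrict (\<lambda>j. Z j \<omega>) (K i)) S"
    by (rule indep_vars_restrict[OF indep KI disj])
  have c: "indep_vars (\<lambda>_. borel) (\<lambda>i \<omega>. (\<lambda>r. a * r (kv i) + B * r (kw i)) (restrict (\<lambda>j. Z j \<omega>) (K i))) S"
    by (rule indep_vars_compose2[OF r]) (intro borel_measurable_add borel_measurable_times measurable_const measurable_component_any, simp_all)
  show "indep_vars (\<lambda>_. borel) (\<lambda>i \<omega>. a * Z (kv i) \<omega> + B * Z (kw i) \<omega>) S"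
    using c by (rule indep_vars_cong[THEN iffD1, rotated -1]) (auto simp: K_def)
next
  fix i assume i: "i \<in> S"
  have iv: "indep_var (PiM {kv i} (\<lambda>_. borel)) (\<lambda>\<omega>. restrict (\<lambda>j. Z j \<omega>) {kv i})
                      (PiM {kw i} (\<lambda>_. borel)) (\<lambda>\<omega>. restrict (\<lambda>j. Z j \<omega>) {kw i})"
    by (rule indep_var_restrict[OF indep]) (use i kvI kwI kvw in auto)
  have iv2: "indep_var borel ((\<lambda>r. a * r (kv i)) \<circ> (\<lambda>\<omega>. restrict (\<lambda>j. Z j \<omega>) {kv i}))
                       borel ((\<lambda>r. B * r (kw i)) \<circ> (\<lambda>\<omega>. restrict (\<lambda>j. Z j \<omega>) {kw i}))"
    by (rule indep_var_compose[OF iv]; intro borel_measurable_times measurable_const measurable_component_any; simp)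
  have iv3: "indep_var borel (\<lambda>\<omega>. a * Z (kv i) \<omega>) borel (\<lambda>\<omega>. B * Z (kw i) \<omega>)"
    using iv2 by (simp add: comp_def)
  have dB: "distributed M lborel (\<lambda>\<omega>. 0 + B * Z (kw i) \<omega>) (\<lambda>x. ennreal (normal_density (0 + B * 0) (\<bar>B\<bar> * 1) x))"
    by (rule normal_density_affine[OF dw[OF i]]) (use B in auto)
  show "distributed M lborel (\<lambda>\<omega>. a * Z (kv i) \<omega> + B * Z (kw i) \<omega>)
            (\<lambda>x. ennreal (normal_density 0 (sqrt (a^2 + B^2)) x))"
  proof (cases "a = 0")
    case True
    then show ?thesis using dB by simp
  next
    case False
    have dA: "distributed M lborel (\<lambda>\<omega>. 0 + a * Z (kv i) \<omega>) (\<lambda>x. ennreal (normal_density (0 + a * 0) (\<bar>a\<bar> * 1) x))"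
      by (rule normal_density_affine[OF dv[OF i]]) (use False in auto)
    have "distributed M lborel (\<lambda>\<omega>. a * Z (kv i) \<omega> + B * Z (kw i) \<omega>)
            (\<lambda>x. ennreal (normal_density (0 + 0) (sqrt (\<bar>a\<bar>^2 + \<bar>B\<bar>^2)) x))"
      by (rule add_indep_normal[OF iv3]) (use False B dA dB in simp_all)
    then show ?thesis by simp
  qed
qed

primrec Xr :: "real \<Rightarrow> real \<Rightarrow> (rvidx \<Rightarrow> real) \<Rightarrow> nat \<Rightarrow> real" where
  "Xr A B r 0 = r IX0"
| "Xr A B r (Suc k) = A * Xr A B r k + B * r (IW (Suc k))"

definition Xi :: "real \<Rightarrow> real \<Rightarrow> real \<Rightarrow> real \<Rightarrow> nat \<Rightarrow> nat \<Rightarrow> (rvidx \<Rightarrow> real) \<Rightarrow> nat \<Rightarrow> real" where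
  "Xi A B C D N k r = enkf A B C D N (\<lambda>i. r (IXi i)) (\<lambda>j. C * Xr A B r j + D * r (IV j))
      (\<lambda>j i. r (IVp j i)) (\<lambda>j i. r (IWp j i)) k"

lemma Xi_0: "Xi A B C D N 0 r = (\<lambda>i. r (IXi i))"
  by (simp add: Xi_def)

lemma Xi_Suc: "Xi A B C D N (Suc k) r = (\<lambda>i. A * (Xi A B C D N k r i
     + C * svar N (Xi A B C D N k r) / (C^2 * svar N (Xi A B C D N k r) + D^2)
       * ((C * Xr A B r k + D * r (IV k)) - C * Xi A B C D N k r i - D * r (IVp k i)))
     + B * r (IWp (Suc k) i))"
  by (simp add: Xi_def Let_def)

lemma Xr_measurable[measurable]: "(\<lambda>r. Xr A B r k) \<in> borel_measurable (PiM J (\<lambda>_. (borel :: real measure)))"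
proof (induction k)
  case 0
  then show ?case by (simp add: measurable_component_any)
next
  case (Suc k)
  note measurable_component_any[measurable]
  show ?case using Suc by simp
qed

lemma Xi_measurable: "(\<lambda>r. Xi A B C D N k r i) \<in> borel_measurable (PiM J (\<lambda>_. (borel :: real measure)))"
proof (induction k arbitrary: i)
  case 0
  then show ?case by (simp add: Xi_0 measurable_component_any)
next
  case (Suc k)
  note measurable_component_any[measurable]
  note Suc[measurable]
  have sv[measurable]: "(\<lambda>r. svar N (Xi A B C D N k r)) \<in> borel_measurable (PiM J (\<lambda>_. (borel :: real measure)))"
    unfolding svar_def smean_def by measurable
  show ?case unfolding Xi_Suc by measurable
qed

lemma Xr_cong: "(\<And>j. r' IX0 = r IX0) \<Longrightarrow> (\<And>j. r' (IW j) = r (IW j)) \<Longrightarrow> Xr A B r' k = Xr A B r k"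
  by (induction k) auto

lemma Xi_cong:
  assumes h: "\<And>j. j \<in> J \<Longrightarrow> r' j = r j"
    and J: "IX0 \<in> J" "\<And>j. IW j \<in> J" "\<And>j. IV j \<in> J" "\<And>i. i \<in> {1..N+1} \<Longrightarrow> IXi i \<in> J"
      "\<And>k i. k < n \<Longrightarrow> i \<in> {1..N+1} \<Longrightarrow> IVp k i \<in> J"
      "\<And>k i. k < n \<Longrightarrow> i \<in> {1..N+1} \<Longrightarrow> IWp (Suc k) i \<in> J"
  shows "k \<le> n \<Longrightarrow> i \<in> {1..N+1} \<Longrightarrow> Xi A B C D N k r' i = Xi A B C D N k r i"
proof (induction k arbitrary: i)
  case 0
  then show ?case using h J by (simp add: Xi_0)
next
  case (Suc k)
  have IH: "\<And>i. i \<in> {1..N+1} \<Longrightarrow> Xi A B C D N k r' i = Xi A B C D N k r i" using Suc by simp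
  have sv: "svar N (Xi A B C D N k r') = svar N (Xi A B C D N k r)" by (rule svar_cong) (rule IH)
  have xr: "Xr A B r' k = Xr A B r k" by (rule Xr_cong) (use h J in auto)
  have k: "k < n" using Suc by simp
  show ?case unfolding Xi_Suc sv xr using IH[OF Suc(3)] h J(3) J(5)[OF k Suc(3)] J(6)[OF k Suc(3)] by simp
qed

lemma Xi_step:
  fixes A B C D :: real
  defines "g \<equiv> \<lambda>p. C * p / (C^2 * p + D^2)"
  shows "svar N (Xi A B C D N (Suc k) r) = svar N (\<lambda>i. A * (1 - g (svar N (Xi A B C D N k r)) * C) * Xi A B C D N k r i
      + (- A * g (svar N (Xi A B C D N k r)) * D) * r (IVp k i) + B * r (IWp (Suc k) i))"
proof -
  let ?x = "Xi A B C D N k r"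
  let ?g = "g (svar N ?x)"
  let ?Y = "C * Xr A B r k + D * r (IV k)"
  have ring: "A * (x + gg * (Y - C * x - D * v)) + B * w = (A * (1 - gg * C) * x + (- A * gg * D) * v + B * w) + A * gg * Y"
    for x gg Y v w :: real by (simp add: algebra_simps)
  have "Xi A B C D N (Suc k) r = (\<lambda>i. (A * (1 - ?g * C) * ?x i + (- A * ?g * D) * r (IVp k i) + B * r (IWp (Suc k) i)) + A * ?g * ?Y)"
    unfolding Xi_Suc g_def by (rule ext) (rule ring)
  then show ?thesis by (simp add: svar_shift)
qed

lemma phi_identity:
  fixes A B C D p :: real
  assumes D: "D \<noteq> 0" and p: "0 \<le> p"
  defines "g \<equiv> C * p / (C^2 * p + D^2)"
  shows "phi A B C D p = (A * (1 - g * C))^2 * p + (- A * g * D)^2 + B^2"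
proof -
  define d where "d = C^2 * p + D^2"
  have d: "0 < d" unfolding d_def using D p by (simp add: add_nonneg_pos)
  have d2: "0 < (C/D)^2 * p + 1" using D p by (simp add: add_nonneg_pos)
  have gd: "g = C * p / d" unfolding g_def d_def by simp
  have e1: "1 - g * C = D^2 / d" unfolding gd using d by (simp add: field_simps power2_eq_square d_def)
  have "(A * (1 - g * C))^2 * p + (- A * g * D)^2 = A^2 * D^2 * p * (D^2 + C^2 * p) / d^2"
    unfolding e1 gd using d by (simp add: field_simps power2_eq_square, unfold d_def, algebra)
  also have "\<dots> = A^2 * D^2 * p / d"
    using d by (simp add: power2_eq_square add.commute d_def)
  also have "\<dots> = A^2 * p / ((C/D)^2 * p + 1)"
    using d d2 D unfolding d_def by (simp add: field_simps power2_eq_square)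
  finally have "(A * (1 - g * C))^2 * p + (- A * g * D)^2 + B^2 = A^2 * p / ((C/D)^2 * p + 1) + B^2" by simp
  also have "\<dots> = phi A B C D p"
    unfolding phi_def Let_def using d2 by (simp add: field_simps)
  finally show ?thesis by simp
qed

lemma phi_pos:
  assumes D: "D \<noteq> 0" and B: "B \<noteq> 0" and q: "0 \<le> q"
  shows "0 < phi A B C D q"
proof -
  have "0 < B^2" using B by simp
  moreover have "0 \<le> (A * (1 - C * q / (C^2 * q + D^2) * C))^2 * q" using q by simp
  ultimately show ?thesis unfolding phi_identity[OF D q] by (simp add: add_nonneg_pos)
qed

lemma main_lemma:
  fixes A B C D :: real and M :: "'a measure" and N n :: nat
  assumes nz: "A \<noteq> 0" "B \<noteq> 0" "C \<noteq> 0" "D \<noteq> 0"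
    and PS: "prob_space M" and Nev: "even N" and N4: "N > 4"
    and ind: "prob_space.indep_vars M (\<lambda>_. borel) (rvfam X0 V W xi0 Vp Wp) (rvidx_set N)"
    and dVp: "\<forall>k. \<forall>i\<in>{1..N+1}. distributed M lborel (Vp k i) (\<lambda>x. ennreal (normal_density 0 1 x))"
    and dWp: "\<forall>k. \<forall>i\<in>{1..N+1}. distributed M lborel (Wp k i) (\<lambda>x. ennreal (normal_density 0 1 x))"
    and X0: "\<forall>\<omega>\<in>space M. X 0 \<omega> = X0 \<omega>"
    and XS: "\<forall>k. \<forall>\<omega>\<in>space M. X (Suc k) \<omega> = A * X k \<omega> + B * W (Suc k) \<omega>"
  shows "(let p = (\<lambda>k \<omega>. enkf_p A B C D N (\<lambda>i. xi0 i \<omega>) (\<lambda>j. C * X j \<omega> + D * V j \<omega>)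
                     (\<lambda>j i. Vp j i \<omega>) (\<lambda>j i. Wp j i \<omega>) k)
     in AE \<omega> in M.
          1 \<le> real_cond_exp M (vimage_algebra (space M) (p n) borel)
                 (\<lambda>\<omega>. phi A B C D (p n \<omega>) / p (Suc n) \<omega>) \<omega>
        \<and> real_cond_exp M (vimage_algebra (space M) (p n) borel)
                 (\<lambda>\<omega>. phi A B C D (p n \<omega>) / p (Suc n) \<omega>) \<omega> \<le> 1 + 12 / real N)"
proof -
  interpret prob_space M by (rule PS)
  have N6: "6 \<le> N"
  proof (rule ccontr)
    assume "\<not> 6 \<le> N"
    then have "N = 5" using N4 by simp
    then show False using Nev by simp
  qed
  let ?S = "{1..N+1}"
  define p where "p = (\<lambda>k \<omega>. enkf_p A B C D N (\<lambda>i. xi0 i \<omega>) (\<lambda>j. C * X j \<omega> + D * V j \<omega>)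
                     (\<lambda>j i. Vp j i \<omega>) (\<lambda>j i. Wp j i \<omega>) k)"
  define rw where "rw \<omega> = (\<lambda>k. rvfam X0 V W xi0 Vp Wp k \<omega>)" for \<omega>
  define I where "I = rvidx_set N"
  define I2 where "I2 = IVp n ` ?S \<union> IWp (Suc n) ` ?S"
  define I1 where "I1 = I - I2"
  define R1 where "R1 \<omega> = restrict (rw \<omega>) I1" for \<omega>
  define R2 where "R2 \<omega> = restrict (rw \<omega>) I2" for \<omega>
  define P1 where "P1 = PiM I1 (\<lambda>_. (borel :: real measure))"
  define P2 where "P2 = PiM I2 (\<lambda>_. (borel :: real measure))"
  have I2I: "I2 \<subseteq> I" unfolding I2_def I_def rvidx_set_def by auto
  have iv: "indep_var P1 R1 P2 R2"
    unfolding P1_def P2_def R1_def R2_def rw_def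
    by (rule indep_var_restrict[OF ind]) (use I2I in \<open>auto simp: I1_def I_def\<close>)
  have R1m[measurable]: "R1 \<in> measurable M P1" using indep_var_rv1[OF iv] .
  have R2m[measurable]: "R2 \<in> measurable M P2" using indep_var_rv2[OF iv] .
  have J1a: "IX0 \<in> I1" unfolding I1_def I2_def I_def rvidx_set_def by blast
  have J1b: "IW j \<in> I1" for j unfolding I1_def I2_def I_def rvidx_set_def by blast
  have J1c: "IV j \<in> I1" for j unfolding I1_def I2_def I_def rvidx_set_def by blast
  have J1d: "IXi i \<in> I1" if "i \<in> ?S" for i unfolding I1_def I2_def I_def rvidx_set_def using that by blast
  have J1e: "IVp k i \<in> I1" if "k < n" "i \<in> ?S" for k i
    unfolding I1_def I2_def I_def rvidx_set_def using that by blast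
  have J1f: "IWp (Suc k) i \<in> I1" if "k < n" "i \<in> ?S" for k i
    unfolding I1_def I2_def I_def rvidx_set_def using that by blast
  note J1 = J1a J1b J1c J1d J1e J1f
  have XrX: "\<omega> \<in> space M \<Longrightarrow> X j \<omega> = Xr A B (rw \<omega>) j" for \<omega> j
    by (induction j) (use X0 XS in \<open>auto simp: rw_def rvfam_def\<close>)
  have p_eq: "p k \<omega> = svar N (Xi A B C D N k (rw \<omega>))" if "\<omega> \<in> space M" for k \<omega>
  proof -
    have "(\<lambda>j. C * X j \<omega> + D * V j \<omega>) = (\<lambda>j. C * Xr A B (rw \<omega>) j + D * rw \<omega> (IV j))"
      using XrX[OF that] by (auto simp: rw_def rvfam_def)
    then show ?thesis unfolding p_def enkf_p_def Xi_def by (simp add: rw_def rvfam_def)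
  qed
  have Xi_R1: "Xi A B C D N k (R1 \<omega>) i = Xi A B C D N k (rw \<omega>) i" if "k \<le> n" "i \<in> ?S" for k i \<omega>
    by (rule Xi_cong[where J = I1, OF _ J1 that]) (simp add: R1_def)
  have pn_eq: "p n \<omega> = svar N (Xi A B C D N n (R1 \<omega>))" if "\<omega> \<in> space M" for \<omega>
    unfolding p_eq[OF that] by (rule svar_cong) (simp add: Xi_R1)
  define aa where "aa q = A * (1 - C * q / (C^2 * q + D^2) * C)" for q
  define al where "al q = - A * (C * q / (C^2 * q + D^2)) * D" for q
  define Gf where "Gf x z = svar N (\<lambda>i. aa (svar N x) * x i + al (svar N x) * z (IVp n i) + B * z (IWp (Suc n) i))" for x z
  have pS_eq: "p (Suc n) \<omega> = Gf (Xi A B C D N n (R1 \<omega>)) (R2 \<omega>)" if "\<omega> \<in> space M" for \<omega>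
  proof -
    have sv: "svar N (Xi A B C D N n (R1 \<omega>)) = svar N (Xi A B C D N n (rw \<omega>))"
      by (rule svar_cong) (simp add: Xi_R1)
    show ?thesis
      unfolding p_eq[OF that] Xi_step Gf_def sv aa_def al_def
      by (rule svar_cong) (simp add: Xi_R1 R2_def I2_def)
  qed
  note Xi_measurable[measurable] measurable_component_any[measurable]
  have qm[measurable]: "(\<lambda>r. svar N (Xi A B C D N n r)) \<in> borel_measurable P1"
    unfolding svar_def smean_def P1_def by measurable
  have pnm[measurable]: "p n \<in> borel_measurable M"
  proof -
    have "(\<lambda>\<omega>. svar N (Xi A B C D N n (R1 \<omega>))) \<in> borel_measurable M" by measurable
    then show ?thesis by (subst measurable_cong[OF pn_eq]) auto
  qed
  have Gfm[measurable]: "(\<lambda>z. Gf (Xi A B C D N n (fst z)) (snd z)) \<in> borel_measurable (P1 \<Otimes>\<^sub>M P2)"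
    unfolding Gf_def svar_def smean_def aa_def al_def P1_def P2_def by measurable
  have pSm[measurable]: "p (Suc n) \<in> borel_measurable M"
  proof -
    have "(\<lambda>\<omega>. Gf (Xi A B C D N n (fst (R1 \<omega>, R2 \<omega>))) (snd (R1 \<omega>, R2 \<omega>))) \<in> borel_measurable M" by measurable
    then show ?thesis by (subst measurable_cong[OF pS_eq]) auto
  qed
  define F where "F = vimage_algebra (space M) (p n) borel"
  have setsF: "sets F = {p n -` Bs \<inter> space M | Bs. Bs \<in> sets borel}"
    unfolding F_def by (rule sets_vimage_algebra2) simp
  have sub: "subalgebra M F"
    unfolding subalgebra_def using setsF by (auto simp: F_def)
  define f where "f \<omega> = phi A B C D (p n \<omega>) / p (Suc n) \<omega>" for \<omega>
  have p0: "0 \<le> p k \<omega>" for k \<omega> unfolding p_def enkf_p_def by (rule svar_nonneg)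
  have f0: "0 \<le> f \<omega>" for \<omega> unfolding f_def using phi_pos[OF nz(4) nz(2) p0] p0 by (simp add: less_imp_le)
  have fm[measurable]: "f \<in> borel_measurable M" unfolding f_def phi_def Let_def by measurable
  have bnd: "ennreal 1 * emeasure M Aset \<le> (\<integral>\<^sup>+\<omega>. indicator Aset \<omega> * ennreal (f \<omega>) \<partial>M)
      \<and> (\<integral>\<^sup>+\<omega>. indicator Aset \<omega> * ennreal (f \<omega>) \<partial>M) \<le> ennreal (1 + 12 / real N) * emeasure M Aset"
    if AF: "Aset \<in> sets F" for Aset
  proof -
    obtain Bs where Bs: "Bs \<in> sets borel" and AB: "Aset = p n -` Bs \<inter> space M" using AF setsF by auto
    note Bs[measurable]
    have AM: "Aset \<in> sets M" using sub AF by (auto simp: subalgebra_def)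
    define g where "g z = indicator Bs (svar N (Xi A B C D N n (fst z))) * ennreal (phi A B C D (svar N (Xi A B C D N n (fst z))) / Gf (Xi A B C D N n (fst z)) (snd z))" for z
    have gm[measurable]: "g \<in> borel_measurable (P1 \<Otimes>\<^sub>M P2)" unfolding g_def phi_def Let_def by measurable
    have e1: "(\<integral>\<^sup>+\<omega>. indicator Aset \<omega> * ennreal (f \<omega>) \<partial>M) = (\<integral>\<^sup>+\<omega>. g (R1 \<omega>, R2 \<omega>) \<partial>M)"
      by (rule nn_integral_cong) (simp add: g_def AB f_def pn_eq pS_eq indicator_def)
    have e2: "(\<integral>\<^sup>+\<omega>. g (R1 \<omega>, R2 \<omega>) \<partial>M) = (\<integral>\<^sup>+z. g z \<partial>(distr M (P1 \<Otimes>\<^sub>M P2) (\<lambda>\<omega>. (R1 \<omega>, R2 \<omega>))))"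
      by (rule nn_integral_distr[symmetric]) measurable
    have e3: "distr M (P1 \<Otimes>\<^sub>M P2) (\<lambda>\<omega>. (R1 \<omega>, R2 \<omega>)) = distr M P1 R1 \<Otimes>\<^sub>M distr M P2 R2"
      using iv by (simp add: indep_var_distribution_eq)
    interpret D1: prob_space "distr M P1 R1" by (rule prob_space_distr) (rule R1m)
    interpret D2: prob_space "distr M P2 R2" by (rule prob_space_distr) (rule R2m)
    interpret D12: pair_sigma_finite "distr M P1 R1" "distr M P2 R2"
      by (intro pair_sigma_finite.intro prob_space_imp_sigma_finite D1.prob_space_axioms D2.prob_space_axioms)
    have e4: "(\<integral>\<^sup>+z. g z \<partial>(distr M P1 R1 \<Otimes>\<^sub>M distr M P2 R2)) = (\<integral>\<^sup>+r1. (\<integral>\<^sup>+r2. g (r1, r2) \<partial>distr M P2 R2) \<partial>distr M P1 R1)"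
      by (rule D2.nn_integral_fst[symmetric]) measurable
    have inner: "indicator Bs (svar N (Xi A B C D N n r1)) * ennreal 1 \<le> (\<integral>\<^sup>+r2. g (r1, r2) \<partial>distr M P2 R2)
        \<and> (\<integral>\<^sup>+r2. g (r1, r2) \<partial>distr M P2 R2) \<le> indicator Bs (svar N (Xi A B C D N n r1)) * ennreal (1 + 12 / real N)"
      if r1: "r1 \<in> space P1" for r1
    proof -
      define x where "x = Xi A B C D N n r1"
      define q where "q = svar N x"
      have q0: "0 \<le> q" unfolding q_def by (rule svar_nonneg)
      define \<mu> where "\<mu> i = aa q * x i" for i
      define \<epsilon> where "\<epsilon> i \<omega> = al q * rvfam X0 V W xi0 Vp Wp (IVp n i) \<omega> + B * rvfam X0 V W xi0 Vp Wp (IWp (Suc n) i) \<omega>" for i \<omega>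
      have gr2[measurable]: "(\<lambda>r2. g (r1, r2)) \<in> borel_measurable P2"
        by (rule measurable_Pair2[OF gm r1])
      have i2: "(\<integral>\<^sup>+r2. g (r1, r2) \<partial>distr M P2 R2) = (\<integral>\<^sup>+\<omega>. g (r1, R2 \<omega>) \<partial>M)"
        by (rule nn_integral_distr) measurable
      have Gfr2[measurable]: "(\<lambda>r2. Gf x r2) \<in> borel_measurable P2"
        unfolding Gf_def svar_def smean_def P2_def by measurable
      have i3: "(\<integral>\<^sup>+\<omega>. g (r1, R2 \<omega>) \<partial>M) = indicator Bs q * ennreal (phi A B C D q) * (\<integral>\<^sup>+\<omega>. ennreal (1 / Gf x (R2 \<omega>)) \<partial>M)"
      proof -
        have "(\<integral>\<^sup>+\<omega>. g (r1, R2 \<omega>) \<partial>M) = (\<integral>\<^sup>+\<omega>. (indicator Bs q * ennreal (phi A B C D q)) * ennreal (1 / Gf x (R2 \<omega>)) \<partial>M)"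
        proof (rule nn_integral_cong)
          fix \<omega>
          have "ennreal (phi A B C D q / Gf x (R2 \<omega>)) = ennreal (phi A B C D q) * ennreal (1 / Gf x (R2 \<omega>))"
            using phi_pos[OF nz(4) nz(2) q0] by (simp add: ennreal_mult[symmetric] less_imp_le Gf_def svar_nonneg)
          then show "g (r1, R2 \<omega>) = (indicator Bs q * ennreal (phi A B C D q)) * ennreal (1 / Gf x (R2 \<omega>))"
            unfolding g_def by (simp add: x_def[symmetric] q_def[symmetric] mult.assoc)
        qed
        also have "\<dots> = (indicator Bs q * ennreal (phi A B C D q)) * (\<integral>\<^sup>+\<omega>. ennreal (1 / Gf x (R2 \<omega>)) \<partial>M)"
          by (rule nn_integral_cmult) measurable
        finally show ?thesis .
      qed
      have i4: "(\<integral>\<^sup>+\<omega>. ennreal (1 / Gf x (R2 \<omega>)) \<partial>M) = (\<integral>\<^sup>+\<omega>. ennreal (1 / svar N (\<lambda>i. \<mu> i + \<epsilon> i \<omega>)) \<partial>M)"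
      proof (rule nn_integral_cong)
        fix \<omega>
        have "Gf x (R2 \<omega>) = svar N (\<lambda>i. \<mu> i + \<epsilon> i \<omega>)"
          unfolding Gf_def q_def[symmetric] by (rule svar_cong) (simp add: \<mu>_def \<epsilon>_def R2_def I2_def rw_def)
        then show "ennreal (1 / Gf x (R2 \<omega>)) = ennreal (1 / svar N (\<lambda>i. \<mu> i + \<epsilon> i \<omega>))" by simp
      qed
      define s where "s = sqrt ((al q)^2 + B^2)"
      have s: "0 < s" unfolding s_def using nz(2) by (simp add: add_nonneg_pos)
      have s2: "s^2 = (al q)^2 + B^2" unfolding s_def by simp
      have core_h: "ennreal (1/(svar N \<mu> + s^2)) \<le> (\<integral>\<^sup>+\<omega>. ennreal (1 / svar N (\<lambda>i. \<mu> i + \<epsilon> i \<omega>)) \<partial>M)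
           \<and> (\<integral>\<^sup>+\<omega>. ennreal (1 / svar N (\<lambda>i. \<mu> i + \<epsilon> i \<omega>)) \<partial>M) \<le> ennreal ((1 + 12/N) / (svar N \<mu> + s^2))"
      proof (rule core[OF s Nev N6])
        show "indep_vars (\<lambda>_. borel) \<epsilon> ?S"
          unfolding \<epsilon>_def
          by (rule eps_family(1)[OF ind]) (auto simp: rvidx_set_def inj_def rvfam_def dVp dWp nz(2))
        show "distributed M lborel (\<epsilon> i) (\<lambda>x. ennreal (normal_density 0 s x))" if "i \<in> ?S" for i
          unfolding \<epsilon>_def s_def
          by (rule eps_family(2)[OF ind _ _ _ _ _ _ _ _ that]) (auto simp: rvidx_set_def inj_def rvfam_def dVp dWp nz(2))
      qed
      have phiq: "svar N \<mu> + s^2 = phi A B C D q"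
        unfolding \<mu>_def svar_scale s2 q_def[symmetric] phi_identity[OF nz(4) q0] aa_def al_def by simp
      have ph: "0 < phi A B C D q" by (rule phi_pos[OF nz(4) nz(2) q0])
      have m1: "ennreal (phi A B C D q) * ennreal (1 / phi A B C D q) = 1"
        using ph by (simp add: ennreal_mult[symmetric])
      have m2: "ennreal (phi A B C D q) * ennreal ((1 + 12/N) / phi A B C D q) = ennreal (1 + 12 / real N)"
        using ph by (simp add: ennreal_mult[symmetric])
      let ?J = "(\<integral>\<^sup>+\<omega>. ennreal (1 / svar N (\<lambda>i. \<mu> i + \<epsilon> i \<omega>)) \<partial>M)"
      have "indicator Bs q * ennreal 1 = indicator Bs q * (ennreal (phi A B C D q) * ennreal (1 / phi A B C D q))"
        using m1 by simp
      also have "\<dots> \<le> indicator Bs q * (ennreal (phi A B C D q) * ?J)"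
        using core_h phiq by (intro mult_left_mono) auto
      finally have lo: "indicator Bs q * ennreal 1 \<le> indicator Bs q * ennreal (phi A B C D q) * ?J" by (simp add: mult.assoc)
      have "indicator Bs q * ennreal (phi A B C D q) * ?J \<le> indicator Bs q * (ennreal (phi A B C D q) * ennreal ((1 + 12/N) / phi A B C D q))"
        using core_h phiq by (simp add: mult.assoc) (intro mult_left_mono, auto)
      then have up: "indicator Bs q * ennreal (phi A B C D q) * ?J \<le> indicator Bs q * ennreal (1 + 12 / real N)"
        unfolding m2 .
      show ?thesis using lo up unfolding i2 i3 i4 x_def[symmetric] q_def[symmetric] by simp
    qed
    have o1: "(\<integral>\<^sup>+r1. indicator Bs (svar N (Xi A B C D N n r1)) \<partial>distr M P1 R1) = emeasure M Aset"
    proof -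
      have "(\<integral>\<^sup>+r1. indicator Bs (svar N (Xi A B C D N n r1)) \<partial>distr M P1 R1)
          = (\<integral>\<^sup>+\<omega>. indicator Bs (svar N (Xi A B C D N n (R1 \<omega>))) \<partial>M)"
        by (rule nn_integral_distr) measurable
      also have "\<dots> = (\<integral>\<^sup>+\<omega>. indicator Aset \<omega> \<partial>M)"
        by (rule nn_integral_cong) (simp add: AB pn_eq indicator_def)
      also have "\<dots> = emeasure M Aset" using AM by simp
      finally show ?thesis .
    qed
    have sp1: "space (distr M P1 R1) = space P1" by simp
    have "ennreal 1 * emeasure M Aset = (\<integral>\<^sup>+r1. indicator Bs (svar N (Xi A B C D N n r1)) * ennreal 1 \<partial>distr M P1 R1)"
      by (simp add: o1)
    also have "\<dots> \<le> (\<integral>\<^sup>+r1. (\<integral>\<^sup>+r2. g (r1, r2) \<partial>distr M P2 R2) \<partial>distr M P1 R1)"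
      by (rule nn_integral_mono) (use inner in auto)
    finally have L: "ennreal 1 * emeasure M Aset \<le> (\<integral>\<^sup>+\<omega>. indicator Aset \<omega> * ennreal (f \<omega>) \<partial>M)"
      unfolding e1 e2 e3 e4 .
    have "(\<integral>\<^sup>+r1. (\<integral>\<^sup>+r2. g (r1, r2) \<partial>distr M P2 R2) \<partial>distr M P1 R1)
        \<le> (\<integral>\<^sup>+r1. indicator Bs (svar N (Xi A B C D N n r1)) * ennreal (1 + 12 / real N) \<partial>distr M P1 R1)"
      by (rule nn_integral_mono) (use inner in auto)
    also have "\<dots> = (\<integral>\<^sup>+r1. indicator Bs (svar N (Xi A B C D N n r1)) \<partial>distr M P1 R1) * ennreal (1 + 12 / real N)"
      by (rule nn_integral_multc) measurable
    also have "\<dots> = ennreal (1 + 12 / real N) * emeasure M Aset"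
      unfolding o1 by (rule mult.commute)
    finally have U: "(\<integral>\<^sup>+\<omega>. indicator Aset \<omega> * ennreal (f \<omega>) \<partial>M) \<le> ennreal (1 + 12 / real N) * emeasure M Aset"
      unfolding e1 e2 e3 e4 .
    show ?thesis using L U by simp
  qed
  have "AE \<omega> in M. 1 \<le> real_cond_exp M F f \<omega> \<and> real_cond_exp M F f \<omega> \<le> 1 + 12 / real N"
    by (rule cond_exp_bounds[OF PS sub fm f0 _ _ bnd]) simp_all
  then show ?thesis unfolding Let_def p_def[symmetric] F_def[symmetric] f_def[abs_def] .
qed

theorem mainTheorem15:
  fixes A B C D :: real
  assumes "A \<noteq> 0" and "B \<noteq> 0" and "C \<noteq> 0" and "D \<noteq> 0"
  shows "\<exists>\<iota>::real. \<forall>(M::'a measure) X X0 V W xi0 Vp Wp (N::nat) (n::nat) x0hat P0.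
    prob_space M
    \<and> P0 > 0
    \<and> even N \<and> N > 4
    \<and> prob_space.indep_vars M (\<lambda>_. borel) (rvfam X0 V W xi0 Vp Wp) (rvidx_set N)
    \<and> distributed M lborel X0 (\<lambda>x. ennreal (normal_density x0hat (sqrt P0) x))
    \<and> (\<forall>k. distributed M lborel (V k) (\<lambda>x. ennreal (normal_density 0 1 x)))
    \<and> (\<forall>k. distributed M lborel (W k) (\<lambda>x. ennreal (normal_density 0 1 x)))
    \<and> (\<forall>i\<in>{1..N+1}. distributed M lborel (xi0 i) (\<lambda>x. ennreal (normal_density x0hat (sqrt P0) x)))
    \<and> (\<forall>k. \<forall>i\<in>{1..N+1}. distributed M lborel (Vp k i) (\<lambda>x. ennreal (normal_density 0 1 x)))
    \<and> (\<forall>k. \<forall>i\<in>{1..N+1}. distributed M lborel (Wp k i) (\<lambda>x. ennreal (normal_density 0 1 x)))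
    \<and> (\<forall>\<omega>\<in>space M. X 0 \<omega> = X0 \<omega>)
    \<and> (\<forall>k. \<forall>\<omega>\<in>space M. X (Suc k) \<omega> = A * X k \<omega> + B * W (Suc k) \<omega>)
    \<longrightarrow>
    (let p = (\<lambda>k \<omega>. enkf_p A B C D N (\<lambda>i. xi0 i \<omega>) (\<lambda>j. C * X j \<omega> + D * V j \<omega>)
                     (\<lambda>j i. Vp j i \<omega>) (\<lambda>j i. Wp j i \<omega>) k)
     in AE \<omega> in M.
          1 \<le> real_cond_exp M (vimage_algebra (space M) (p n) borel)
                 (\<lambda>\<omega>. phi A B C D (p n \<omega>) / p (Suc n) \<omega>) \<omega>
        \<and> real_cond_exp M (vimage_algebra (space M) (p n) borel)
                 (\<lambda>\<omega>. phi A B C D (p n \<omega>) / p (Suc n) \<omega>) \<omega> \<le> 1 + \<iota> / real N)"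
    apply (intro exI[of _ "12::real"] allI impI)
  apply (elim conjE)
  apply (rule main_lemma[OF assms])
          apply assumption+
  done

end
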